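(* With the notation of the context, let $\beta^*=\inf_{x\in\Delta}F(x)$. If $r$ is a relation of type 4b, then $x^*\in C_r=\{x\in\Delta: x_r+X_r-x_rX_r<3/4\}$ for every $x^*\in\Delta$ with $F(x^* )=\beta^*$.
   Context: Fix an integer $n\ge2$ and free generators $\xi_1,\dots,\xi_n$ of a free group; throughout $i,j,k\in\{1,\dots,n\}$ and $t,s,p\in\{-1,+1\}$. Let $\Psi$ be the set of reduced words $\xi_i^{2t}$; $\xi_i^t\xi_j^{2s}$ ($i\ne j$); $\xi_i^t\xi_j^s\xi_k^p$ ($i\ne j$, $j\ne k$). For a letter $\xi_a^x$ let $S(\xi_a^x)\subset\Psi$ be the set of words in $\Psi$ beginning with $\xi_a^x$, namely $\{\xi_a^{2x}\}\cup\{\xi_a^x\xi_j^{2s}\}\cup\{\xi_a^x\xi_j^s\xi_k^p\}$; for $a\ne b$ let $S(\xi_a^x\xi_b^y)=\{\xi_a^x\xi_b^{2y}\}\cup\{\xi_a^x\xi_b^y\xi_k^p: k\ne b\}$. A relation $r$ is a pair $(\psi_r,\Psi_r)$ with $\psi_r\in\Psi$, $\Psi_r\subseteq\Psi$. Let $\mathcal{F}$ be the collection of the following relations (indices $i_0\ne j_0$, in type 5a $i_0,j_0,k_0$ pairwise distinct, all signs arbitrary): 1a: $\psi_r=\xi_{i_0}^{2t_0}$, $\Psi_r=\Psi\setminus S(\xi_{i_0}^{t_0})$; 2b: $\psi_r=\xi_{i_0}^{t_0}\xi_{j_0}^{2s_0}$, $\Psi_r=\Psi\setminus S(\xi_{i_0}^{t_0}\xi_{j_0}^{s_0})$;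 3a: $\psi_r=\xi_{i_0}^{t_0}\xi_{j_0}^{s_0}\xi_{i_0}^{t_0}$, $\Psi_r=\Psi\setminus S(\xi_{j_0}^{s_0}\xi_{i_0}^{t_0})$; 4b: $\psi_r=\xi_{i_0}^{t_0}\xi_{j_0}^{s_0}\xi_{i_0}^{-t_0}$, $\Psi_r=S(\xi_{i_0}^{t_0})$; 5a: $\psi_r=\xi_{i_0}^{t_0}\xi_{j_0}^{s_0}\xi_{k_0}^{p_0}$, $\Psi_r=\Psi\setminus S(\xi_{j_0}^{s_0}\xi_{k_0}^{p_0})$. Let $\Delta=\{x\in\mathbb{R}^\Psi: x(\psi)>0\ \forall\psi,\ \sum_{\psi}x(\psi)=1\}$. For a relation $r$ and $x\in\Delta$ put $x_r=x(\psi_r)$, $X_r=\sum_{\psi\in\Psi_r}x(\psi)$, $f_r(x)=\frac{1-x_r}{x_r}\cdot\frac{1-X_r}{X_r}$, and $F(x)=\max_{r\in\mathcal{F}}f_r(x)$. *)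

theory Defs
  imports Complex_Main
begin

text \<open>A letter \<open>\<xi>_i^t\<close> is encoded as a pair (i, t) with i a generator index in {1..n}
  and t :: bool the sign (True = +1, False = -1).  A reduced word is the list of its
  letters, so \<open>\<xi>_i^{2t}\<close> is the list [(i,t),(i,t)].\<close>

type_synonym letter = "nat \<times> bool"
type_synonym word = "letter list"

definition Psi :: "nat \<Rightarrow> word set" where
  "Psi n =
     {[(i,t),(i,t)] | i t. i \<in> {1..n}}
   \<union> {[(i,t),(j,s),(j,s)] | i j t s. i \<in> {1..n} \<and> j \<in> {1..n} \<and> i \<noteq> j}
   \<union> {[(i,t),(j,s),(k,p)] | i j k t s p. i \<in> {1..n} \<and> j \<in> {1..n} \<and> k \<in> {1..n}
        \<and> i \<noteq> j \<and> j \<noteq> k}"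

definition S1 :: "nat \<Rightarrow> letter \<Rightarrow> word set" where
  "S1 n l = (case l of (a,x) \<Rightarrow>
      {[(a,x),(a,x)]}
    \<union> {[(a,x),(j,s),(j,s)] | j s. j \<in> {1..n} \<and> j \<noteq> a}
    \<union> {[(a,x),(j,s),(k,p)] | j k s p. j \<in> {1..n} \<and> k \<in> {1..n} \<and> j \<noteq> a \<and> j \<noteq> k})"

definition S2 :: "nat \<Rightarrow> letter \<Rightarrow> letter \<Rightarrow> word set" where
  "S2 n l1 l2 = (case (l1, l2) of ((a,x),(b,y)) \<Rightarrow>
      {[(a,x),(b,y),(b,y)]}
    \<union> {[(a,x),(b,y),(k,p)] | k p. k \<in> {1..n} \<and> k \<noteq> b})"

text \<open>A relation is a pair (\<psi>_r, \<Psi>_r).  The family \<F> of types 1a, 2b, 3a, 4b, 5a.\<close>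
type_synonym relation = "word \<times> word set"

definition rel_1a :: "nat \<Rightarrow> relation set" where
  "rel_1a n = {([(i,t),(i,t)], Psi n - S1 n (i,t)) | i t. i \<in> {1..n}}"

definition rel_2b :: "nat \<Rightarrow> relation set" where
  "rel_2b n = {([(i,t),(j,s),(j,s)], Psi n - S2 n (i,t) (j,s)) | i j t s.
      i \<in> {1..n} \<and> j \<in> {1..n} \<and> i \<noteq> j}"

definition rel_3a :: "nat \<Rightarrow> relation set" where
  "rel_3a n = {([(i,t),(j,s),(i,t)], Psi n - S2 n (j,s) (i,t)) | i j t s.
      i \<in> {1..n} \<and> j \<in> {1..n} \<and> i \<noteq> j}"

definition rel_4b :: "nat \<Rightarrow> relation set" where
  "rel_4b n = {([(i,t),(j,s),(i,\<not>t)], S1 n (i,t)) | i j t s.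
      i \<in> {1..n} \<and> j \<in> {1..n} \<and> i \<noteq> j}"

definition rel_5a :: "nat \<Rightarrow> relation set" where
  "rel_5a n = {([(i,t),(j,s),(k,p)], Psi n - S2 n (j,s) (k,p)) | i j k t s p.
      i \<in> {1..n} \<and> j \<in> {1..n} \<and> k \<in> {1..n} \<and> i \<noteq> j \<and> j \<noteq> k \<and> i \<noteq> k}"

definition Fam :: "nat \<Rightarrow> relation set" where
  "Fam n = rel_1a n \<union> rel_2b n \<union> rel_3a n \<union> rel_4b n \<union> rel_5a n"

definition Delta :: "nat \<Rightarrow> (word \<Rightarrow> real) set" where
  "Delta n = {x. (\<forall>\<psi>\<in>Psi n. x \<psi> > 0) \<and> (\<forall>\<psi>. \<psi> \<notin> Psi n \<longrightarrow> x \<psi> = 0)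
                 \<and> (\<Sum>\<psi>\<in>Psi n. x \<psi>) = 1}"

definition xr :: "relation \<Rightarrow> (word \<Rightarrow> real) \<Rightarrow> real" where
  "xr r x = x (fst r)"

definition Xr :: "relation \<Rightarrow> (word \<Rightarrow> real) \<Rightarrow> real" where
  "Xr r x = (\<Sum>\<psi>\<in>snd r. x \<psi>)"

definition frel :: "relation \<Rightarrow> (word \<Rightarrow> real) \<Rightarrow> real" where
  "frel r x = ((1 - xr r x) / xr r x) * ((1 - Xr r x) / Xr r x)"

definition Fmax :: "nat \<Rightarrow> (word \<Rightarrow> real) \<Rightarrow> real" where
  "Fmax n x = Max ((\<lambda>r. frel r x) ` Fam n)"

definition beta_star :: "nat \<Rightarrow> real" where
  "beta_star n = Inf (Fmax n ` Delta n)"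

definition C_set :: "relation \<Rightarrow> (word \<Rightarrow> real) set" where
  "C_set r = {x. xr r x + Xr r x - xr r x * Xr r x < 3/4}"

end

theory Submission
  imports Defs
begin

definition Lt :: "nat \<Rightarrow> letter set" where "Lt n = {1..n} \<times> UNIV"

lemma Lt_fin: "finite (Lt n)" unfolding Lt_def by simp
lemma Lt_card: "card (Lt n) = 2 * n" unfolding Lt_def by (simp add: card_cartesian_product)

lemma S1_sub: "fst l \<in> {1..n} \<Longrightarrow> S1 n l \<subseteq> Psi n"
  unfolding S1_def Psi_def by (cases l) auto

lemma S1_hd: "w \<in> S1 n l \<Longrightarrow> hd w = l"
  unfolding S1_def by (cases l) auto

lemma Psi_hd: "w \<in> Psi n \<Longrightarrow> w \<in> S1 n (hd w) \<and> hd w \<in> Lt n"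
  unfolding S1_def Psi_def Lt_def by auto

lemma Psi_UN: "Psi n = (\<Union>l\<in>Lt n. S1 n l)"
proof
  show "Psi n \<subseteq> (\<Union>l\<in>Lt n. S1 n l)" using Psi_hd by blast
  show "(\<Union>l\<in>Lt n. S1 n l) \<subseteq> Psi n" using S1_sub unfolding Lt_def by force
qed

lemma Psi_fin: "finite (Psi n)"
proof -
  have "Psi n \<subseteq> {xs. set xs \<subseteq> Lt n \<and> length xs \<le> 3}"
    unfolding Psi_def Lt_def by auto
  thus ?thesis using finite_lists_length_le[OF Lt_fin] finite_subset by blast
qed

lemma S1_fin: "finite (S1 n l)"
proof -
  have "S1 n l \<subseteq> {xs. set xs \<subseteq> insert l (Lt n) \<and> length xs \<le> 3}"
    unfolding S1_def Lt_def by (cases l) auto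
  thus ?thesis using finite_lists_length_le[of "insert l (Lt n)"] Lt_fin finite_subset by blast
qed

lemma S1_disj: "l \<noteq> l' \<Longrightarrow> S1 n l \<inter> S1 n l' = {}"
  using S1_hd by blast

lemma sum_Psi: "sum g (Psi n) = (\<Sum>l\<in>Lt n. sum g (S1 n l))"
  unfolding Psi_UN
  by (rule sum.UNION_disjoint) (auto simp: Lt_fin S1_fin S1_disj)

definition DS :: "nat \<Rightarrow> letter \<Rightarrow> word set" where
  "DS n l = (\<lambda>(j,s). [l,(j,s),(fst l, \<not> snd l)]) ` (({1..n} - {fst l}) \<times> UNIV)"

lemma DS_card: "fst l \<in> {1..n} \<Longrightarrow> card (DS n l) = 2 * (n - 1)"
proof -
  assume a: "fst l \<in> {1..n}"
  have "inj_on (\<lambda>(j,s). [l,(j,s),(fst l, \<not> snd l)]) (({1..n} - {fst l}) \<times> UNIV)"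
    by (auto simp: inj_on_def)
  hence "card (DS n l) = card (({1..n} - {fst l}) \<times> (UNIV::bool set))"
    unfolding DS_def by (rule card_image)
  also have "\<dots> = 2 * (n - 1)"
    using a by (auto simp: card_cartesian_product)
  finally show ?thesis .
qed

lemma DS_S1: "fst l \<in> {1..n} \<Longrightarrow> DS n l \<subseteq> S1 n l"
  unfolding DS_def S1_def by (cases l) auto

lemma S1_card: "fst l \<in> {1..n} \<Longrightarrow> card (S1 n l) \<le> 1 + 4 * n * (n - 1)"
proof -
  assume a: "fst l \<in> {1..n}"
  let ?D = "(({1..n} - {fst l}) \<times> (UNIV::bool set)) \<times> Lt n"
  have sub: "S1 n l \<subseteq> insert [l,l] ((\<lambda>(l2,l3). [l,l2,l3]) ` ?D)"
    unfolding S1_def Lt_def by (cases l) auto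
  have "card (S1 n l) \<le> card (insert [l,l] ((\<lambda>(l2,l3). [l,l2,l3]) ` ?D))"
    by (rule card_mono[OF _ sub]) (simp add: Lt_fin)
  also have "\<dots> \<le> 1 + card ((\<lambda>(l2,l3). [l,l2,l3]) ` ?D)"
    by (simp add: card_insert_le_m1 card_insert_if)
  also have "\<dots> \<le> 1 + card ?D"
    using card_image_le[of ?D] by (simp add: Lt_fin)
  also have "card ?D = 4 * n * (n - 1)"
    using a by (simp add: card_cartesian_product Lt_card)
  finally show ?thesis by simp
qed

lemma S2_card: "fst l2 \<in> {1..n} \<Longrightarrow> card (S2 n l1 l2) \<le> 2 * n"
proof -
  assume a: "fst l2 \<in> {1..n}"
  have sub: "S2 n l1 l2 \<subseteq> (\<lambda>l3. [l1,l2,l3]) ` Lt n"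
    using a unfolding S2_def Lt_def by (cases l1; cases l2) auto
  have "card (S2 n l1 l2) \<le> card ((\<lambda>l3. [l1,l2,l3]) ` Lt n)"
    by (rule card_mono[OF _ sub]) (simp add: Lt_fin)
  also have "\<dots> \<le> card (Lt n)" by (rule card_image_le) (simp add: Lt_fin)
  finally show ?thesis by (simp add: Lt_card)
qed

lemma S2_fin: "finite (S2 n l1 l2)"
proof -
  have sub: "S2 n l1 l2 \<subseteq> (\<lambda>l3. [l1,l2,l3]) ` insert l2 (Lt n)"
    unfolding S2_def Lt_def by (cases l1; cases l2) auto
  thus ?thesis using finite_subset Lt_fin by blast
qed

definition isAD :: "word \<Rightarrow> bool" where
  "isAD w = (length w = 2 \<or> (length w = 3 \<and> w!2 = (fst (w!0), \<not> snd (w!0))))"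

lemma S1_AD: "fst l \<in> {1..n} \<Longrightarrow> S1 n l \<inter> {w. isAD w} = insert [l,l] (DS n l)"
proof -
  assume a: "fst l \<in> {1..n}"
  obtain i t where l: "l = (i,t)" by (cases l)
  show ?thesis
  proof
    show "S1 n l \<inter> {w. isAD w} \<subseteq> insert [l,l] (DS n l)"
    proof
      fix w assume w: "w \<in> S1 n l \<inter> {w. isAD w}"
      hence w1: "w \<in> S1 n (i,t)" and w2: "isAD w" using l by auto
      from w1 consider "w = [(i,t),(i,t)]"
        | j s where "w = [(i,t),(j,s),(j,s)]" "j \<in> {1..n}" "j \<noteq> i"
        | j k s p where "w = [(i,t),(j,s),(k,p)]" "j \<in> {1..n}" "k \<in> {1..n}" "j \<noteq> i" "j \<noteq> k"
        unfolding S1_def by auto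
      thus "w \<in> insert [l,l] (DS n l)"
      proof cases
        case 1 thus ?thesis using l by simp
      next
        case (2 j s) thus ?thesis using w2 unfolding isAD_def by simp
      next
        case (3 j k s p)
        hence "k = i" "p = (\<not> t)" using w2 unfolding isAD_def by auto
        thus ?thesis using 3 l unfolding DS_def by auto
      qed
    qed
    show "insert [l,l] (DS n l) \<subseteq> S1 n l \<inter> {w. isAD w}"
      using DS_S1[OF a] a l unfolding S1_def by (auto simp: isAD_def DS_def)
  qed
qed

lemma S2_shape: "w \<in> S2 n l1 l2 \<Longrightarrow> \<exists>l3. w = [l1,l2,l3]"
  unfolding S2_def by (cases l1; cases l2) auto

lemma S2_AD: "S2 n l1 l2 \<inter> {w. isAD w} \<subseteq> {[l1,l2,(fst l1, \<not> snd l1)]}"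
proof
  fix w assume "w \<in> S2 n l1 l2 \<inter> {w. isAD w}"
  then obtain l3 where "w = [l1,l2,l3]" "isAD w" using S2_shape by blast
  thus "w \<in> {[l1,l2,(fst l1, \<not> snd l1)]}" unfolding isAD_def by simp
qed

lemma S1_AD_card: "fst l \<in> {1..n} \<Longrightarrow> card (S1 n l \<inter> {w. isAD w}) = 1 + 2 * (n - 1)"
proof -
  assume a: "fst l \<in> {1..n}"
  have "[l,l] \<notin> DS n l" unfolding DS_def by auto
  moreover have "finite (DS n l)" using S1_fin DS_S1[OF a] finite_subset by blast
  ultimately show ?thesis using S1_AD[OF a] DS_card[OF a] by simp
qed

lemma pigeon:
  fixes f :: "'a \<Rightarrow> real"
  assumes "finite A" "A \<noteq> {}" "sum f A \<le> c"
  shows "\<exists>a\<in>A. f a \<le> c / card A"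
proof (rule ccontr)
  assume "\<not> ?thesis"
  hence "\<forall>a\<in>A. c / card A < f a" by auto
  hence "sum (\<lambda>a. c / card A) A < sum f A"
    using assms by (intro sum_strict_mono) auto
  moreover have "sum (\<lambda>a. c / card A) A = c" using assms by simp
  ultimately show False using assms by simp
qed

lemma ineqA:
  fixes n X xw :: real
  assumes n: "n \<ge> 2" and X: "0 < X" "X * (2*(2*n-1)) < 1" and xw: "0 < xw" "xw * (2*(n-1)) \<le> X"
  shows "(1 - xw)/xw * ((1 - X)/X) > (4*(n-1)*(2*n-1) - 1)*(4*n-3)"
proof -
  define u where "u = 1/X"
  define v where "v = 1/xw"
  have u: "u > 2*(2*n-1)" using X n unfolding u_def by (simp add: field_simps)
  have v: "v \<ge> 2*(n-1)*u" using X xw n unfolding u_def v_def by (simp add: field_simps)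
  have e1: "(1 - xw)/xw = v - 1" using xw unfolding v_def by (simp add: field_simps)
  have e2: "(1 - X)/X = u - 1" using X unfolding u_def by (simp add: field_simps)
  have "2*(n-1)*u > 2*(n-1)*(2*(2*n-1))" using u n by (intro mult_strict_left_mono) auto
  hence a1: "v - 1 > 4*(n-1)*(2*n-1) - 1" using v by linarith
  have "2*(2*n-1) = 4*n-2" by simp
  hence a2: "u - 1 > 4*n-3" using u by linarith
  have "(4*(n-1)*(2*n-1) - 1)*(4*n-3) < (v - 1) * (u - 1)"
  proof (rule mult_strict_mono[OF a1 a2])
    have "(n-1)*(2*n-1) \<ge> 1*3" using n by (intro mult_mono) auto
    thus "0 < v - 1" using a1 by linarith
    show "0 \<le> 4*n-3" using n by simp
  qed
  thus ?thesis using e1 e2 by simp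
qed

definition Lb :: "nat \<Rightarrow> real" where
  "Lb n = (4*(real n-1)*(2*real n-1) - 1)*(4*real n-3)"

lemma Delta_pos: "x \<in> Delta n \<Longrightarrow> w \<in> Psi n \<Longrightarrow> x w > 0"
  unfolding Delta_def by auto

lemma Delta_sum: "x \<in> Delta n \<Longrightarrow> sum x (Psi n) = 1"
  unfolding Delta_def by auto

lemma partA:
  assumes n: "n \<ge> 2" and x: "x \<in> Delta n" and ij: "i \<in> {1..n}" "j \<in> {1..n}" "i \<noteq> j"
    and viol: "x [(i,t),(j,s),(i,\<not>t)] + sum x (S1 n (i,t)) - x [(i,t),(j,s),(i,\<not>t)] * sum x (S1 n (i,t)) \<ge> 3/4"
  shows "\<exists>r\<in>rel_4b n. frel r x > Lb n"
proof -
  define a where "a = x [(i,t),(j,s),(i,\<not>t)]"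
  define b where "b = sum x (S1 n (i,t))"
  have S1sub: "\<And>l. l \<in> Lt n \<Longrightarrow> S1 n l \<subseteq> Psi n"
  proof -
    fix l assume "l \<in> Lt n" hence "fst l \<in> {1..n}" unfolding Lt_def by auto
    thus "S1 n l \<subseteq> Psi n" by (rule S1_sub)
  qed
  have it: "(i,t) \<in> Lt n" using ij unfolding Lt_def by auto
  have nn: "\<And>w. w \<in> Psi n \<Longrightarrow> x w \<ge> 0" using Delta_pos[OF x] less_imp_le by blast
  have m1: "[(i,t),(j,s),(i,\<not>t)] \<in> S1 n (i,t)" using ij unfolding S1_def by auto
  have m2: "[(i,t),(i,t)] \<in> S1 n (i,t)" unfolding S1_def by auto
  have "a + x [(i,t),(i,t)] = sum x {[(i,t),(j,s),(i,\<not>t)], [(i,t),(i,t)]}"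
    unfolding a_def by simp
  also have "\<dots> \<le> b" unfolding b_def
    using m1 m2 S1sub[OF it] nn by (intro sum_mono2) (auto simp: S1_fin)
  finally have ab: "a + x [(i,t),(i,t)] \<le> b" .
  have "x [(i,t),(i,t)] > 0" using m2 S1sub[OF it] Delta_pos[OF x] by blast
  with ab have ab2: "a < b" by linarith
  have "sum x (S1 n (i,t)) \<le> sum x (Psi n)"
    by (rule sum_mono2[OF Psi_fin S1sub[OF it]]) (use nn in auto)
  hence b1: "b \<le> 1" unfolding b_def using Delta_sum[OF x] by simp
  have viol': "a + b - a*b \<ge> 3/4" using viol unfolding a_def b_def .
  have bh: "b > 1/2"
  proof (rule ccontr)
    assume "\<not> b > 1/2"
    hence "1 - b \<ge> 1/2" by simp
    moreover have "1 - a > 1 - b" using ab2 by simp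
    ultimately have "(1-a)*(1-b) > (1-b)*(1-b)"  by (intro mult_strict_right_mono) auto
    moreover have "(1-b)*(1-b) \<ge> (1/2)*(1/2)" using \<open>1 - b \<ge> 1/2\<close> by (intro mult_mono) auto
    ultimately show False using viol' by (simp add: algebra_simps)
  qed
  have "(\<Sum>l\<in>Lt n. sum x (S1 n l)) = 1" using sum_Psi[of x n] Delta_sum[OF x] by simp
  hence "sum x (S1 n (i,t)) + (\<Sum>l\<in>Lt n - {(i,t)}. sum x (S1 n l)) = 1"
    using sum.remove[OF Lt_fin it, of "\<lambda>l. sum x (S1 n l)"] by simp
  hence rest: "(\<Sum>l\<in>Lt n - {(i,t)}. sum x (S1 n l)) = 1 - b" unfolding b_def by simp
  have cardR: "card (Lt n - {(i,t)}) = 2*n - 1" using it by (simp add: Lt_card Lt_fin)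
  have neR: "Lt n - {(i,t)} \<noteq> {}" 
  proof
    assume e: "Lt n - {(i,t)} = {}"
    have "card (Lt n - {(i,t)}) = 0" by (subst e) simp
    with cardR n show False by simp
  qed
  obtain l where l: "l \<in> Lt n - {(i,t)}" and lX: "sum x (S1 n l) \<le> (1 - b) / card (Lt n - {(i,t)})"
    using pigeon[OF _ neR, of "\<lambda>l. sum x (S1 n l)" "1-b"] rest Lt_fin by auto
  have rc: "real (card (Lt n - {(i,t)})) = 2 * real n - 1" using cardR n by simp
  define X where "X = sum x (S1 n l)"
  have lL: "l \<in> Lt n" using l by simp
  have lf: "fst l \<in> {1..n}" using lL unfolding Lt_def by auto
  have Xpos: "X > 0"
  proof -
    have "[l,l] \<in> S1 n l" unfolding S1_def by (cases l) auto
    hence "x [l,l] \<le> X" unfolding X_def using S1sub[OF lL] nn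
      by (intro member_le_sum) (auto simp: S1_fin)
    moreover have "x [l,l] > 0" using \<open>[l,l] \<in> S1 n l\<close> S1sub[OF lL] Delta_pos[OF x] by blast
    ultimately show ?thesis by simp
  qed
  have Xh: "X * (2*(2*real n-1)) < 1"
  proof -
    have "X \<le> (1-b)/(2*real n - 1)" using lX rc unfolding X_def by simp
    hence "X * (2*real n - 1) \<le> 1 - b" using n by (simp add: field_simps)
    thus ?thesis using bh by linarith
  qed
  have DSsub: "DS n l \<subseteq> S1 n l" using DS_S1[OF lf] .
  have DSfin: "finite (DS n l)" using DSsub S1_fin finite_subset by blast
  have DScard: "card (DS n l) = 2*(n-1)" using DS_card[OF lf] .
  have DSne: "DS n l \<noteq> {}" using DScard n DSfin by auto
  have "sum x (DS n l) \<le> X" unfolding X_def using DSsub S1sub[OF lL] nn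
    by (intro sum_mono2) (auto simp: S1_fin)
  then obtain w where w: "w \<in> DS n l" and wx: "x w \<le> X / card (DS n l)"
    using pigeon[OF DSfin DSne, of x X] by auto
  have rc2: "real (card (DS n l)) = 2 * (real n - 1)" using DScard n by simp
  have wx2: "x w * (2*(real n - 1)) \<le> X" using wx rc2 n by (simp add: field_simps)
  have wpos: "x w > 0" using w DSsub S1sub[OF lL] Delta_pos[OF x] by blast
  obtain k p where kp: "l = (k,p)" by (cases l)
  have "\<exists>j' s'. w = [(k,p),(j',s'),(k,\<not>p)] \<and> j' \<in> {1..n} \<and> j' \<noteq> k"
    using w kp unfolding DS_def by auto
  then obtain j' s' where w': "w = [(k,p),(j',s'),(k,\<not>p)]" "j' \<in> {1..n}" "j' \<noteq> k"
    by blast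
  define r where "r = (w, S1 n l)"
  have rin: "r \<in> rel_4b n" unfolding r_def rel_4b_def using w' kp lf by auto
  have "frel r x = (1 - x w)/x w * ((1 - X)/X)"
    unfolding frel_def xr_def Xr_def r_def X_def by simp
  also have "\<dots> > Lb n" unfolding Lb_def
    using ineqA[of "real n" X "x w"] n Xpos Xh wpos wx2 by simp
  finally show ?thesis using rin by blast
qed

lemma num1:
  fixes N :: real assumes "N \<ge> 2"
  shows "((2*N-1)*(10*N-1)/4 - 1) * (5*(2*N-1)/4) < (4*(N-1)*(2*N-1) - 1)*(4*N-3)"
proof -
  define d where "d = N - 2"
  have d: "d \<ge> 0" using assms d_def by simp
  have N: "N = d + 2" using d_def by simp
  have "(4*(N-1)*(2*N-1) - 1)*(4*N-3) - ((2*N-1)*(10*N-1)/4 - 1) * (5*(2*N-1)/4)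
        = 85/16 + 377/8*d + 235/4*d^2 + 39/2*d^3"
    unfolding N by (simp add: field_simps power2_eq_square power3_eq_cube)
  moreover have "85/16 + 377/8*d + 235/4*d^2 + 39/2*d^3 > 0" using d
    by (intro add_pos_nonneg mult_nonneg_nonneg) auto
  ultimately show ?thesis by linarith
qed

lemma num2:
  fixes N :: real assumes "N \<ge> 2"
  shows "(10*N-1)*(10*N-1) < 32*N*((4*(N-1)*(2*N-1) - 1)*(4*N-3))"
proof -
  define d where "d = N - 2"
  have d: "d \<ge> 0" using assms d_def by simp
  have N: "N = d + 2" using d_def by simp
  have "32*N*((4*(N-1)*(2*N-1) - 1)*(4*N-3)) - (10*N-1)*(10*N-1)
        = 3159 + 10596*d + 12188*d^2 + 5888*d^3 + 1024*d^4"
    unfolding N by (simp add: field_simps power2_eq_square power3_eq_cube power4_eq_xxxx)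
  moreover have "3159 + 10596*d + 12188*d^2 + 5888*d^3 + 1024*d^4 > 0" using d
    by (intro add_pos_nonneg mult_nonneg_nonneg) auto
  ultimately show ?thesis by linarith
qed

lemma num3:
  fixes N :: real assumes "N \<ge> 2"
  shows "5*N*(10*N-1) < 2*(2*N-1)*((4*(N-1)*(2*N-1) - 1)*(4*N-3))"
proof -
  define d where "d = N - 2"
  have d: "d \<ge> 0" using assms d_def by simp
  have N: "N = d + 2" using d_def by simp
  have "2*(2*N-1)*((4*(N-1)*(2*N-1) - 1)*(4*N-3)) - 5*N*(10*N-1)
        = 140 + 889*d + 1246*d^2 + 672*d^3 + 128*d^4"
    unfolding N by (simp add: field_simps power2_eq_square power3_eq_cube power4_eq_xxxx)
  moreover have "140 + 889*d + 1246*d^2 + 672*d^3 + 128*d^4 > 0" using d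
    by (intro add_pos_nonneg mult_nonneg_nonneg) auto
  ultimately show ?thesis by linarith
qed

definition ee :: "nat \<Rightarrow> real" where "ee n = 1 / (8 * real n)"
definition zz :: "nat \<Rightarrow> word \<Rightarrow> real" where "zz n w = (if isAD w then 1 else ee n)"
definition ZZ :: "nat \<Rightarrow> real" where "ZZ n = sum (zz n) (Psi n)"
definition yy :: "nat \<Rightarrow> word \<Rightarrow> real" where
  "yy n w = (if w \<in> Psi n then zz n w / ZZ n else 0)"

definition Bp :: "nat \<Rightarrow> real" where
  "Bp n = (2*real n - 1) + ee n * (1 + 4*real n*(real n - 1))"

lemma ee_pos: "n \<ge> 2 \<Longrightarrow> 0 < ee n" unfolding ee_def by simp
lemma ee_le1: "n \<ge> 2 \<Longrightarrow> ee n \<le> 1" unfolding ee_def by (simp add: field_simps)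
lemma zz_pos: "n \<ge> 2 \<Longrightarrow> 0 < zz n w" unfolding zz_def using ee_pos by simp
lemma zz_le1: "n \<ge> 2 \<Longrightarrow> zz n w \<le> 1" unfolding zz_def using ee_le1 by simp

lemma Lt_fst: "l \<in> Lt n \<Longrightarrow> fst l \<in> {1..n}" unfolding Lt_def by auto

lemma zS1_bounds:
  assumes n: "n \<ge> 2" and l: "l \<in> Lt n"
  shows "2*real n - 1 \<le> sum (zz n) (S1 n l)" "sum (zz n) (S1 n l) \<le> Bp n"
proof -
  have lf: "fst l \<in> {1..n}" using Lt_fst[OF l] .
  let ?A = "S1 n l \<inter> {w. isAD w}"
  have split: "sum (zz n) (S1 n l) = sum (zz n) ?A + sum (zz n) (S1 n l - {w. isAD w})"
    using sum.Int_Diff[OF S1_fin, of "zz n" n l "{w. isAD w}"] by simp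
  have "sum (zz n) ?A = sum (\<lambda>w. 1) ?A" by (rule sum.cong) (auto simp: zz_def)
  also have "\<dots> = real (card ?A)" by simp
  also have "\<dots> = 2*real n - 1" using S1_AD_card[OF lf] n by (simp add: of_nat_diff)
  finally have A: "sum (zz n) ?A = 2*real n - 1" .
  have "sum (zz n) (S1 n l - {w. isAD w}) = sum (\<lambda>w. ee n) (S1 n l - {w. isAD w})"
    by (rule sum.cong) (auto simp: zz_def)
  also have "\<dots> = ee n * real (card (S1 n l - {w. isAD w}))" by simp
  finally have R: "sum (zz n) (S1 n l - {w. isAD w}) = ee n * real (card (S1 n l - {w. isAD w}))" .
  have "card (S1 n l - {w. isAD w}) \<le> card (S1 n l)" by (rule card_mono) (auto simp: S1_fin)
  also have "\<dots> \<le> 1 + 4*n*(n-1)" using S1_card[OF lf] .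
  finally have "real (card (S1 n l - {w. isAD w})) \<le> real (1 + 4*n*(n-1))" by linarith
  also have "\<dots> = 1 + 4*real n*(real n - 1)" using n by (simp add: of_nat_diff)
  finally have c: "real (card (S1 n l - {w. isAD w})) \<le> 1 + 4*real n*(real n - 1)" .
  have "ee n * real (card (S1 n l - {w. isAD w})) \<ge> 0" using ee_pos[OF n] by simp
  thus "2*real n - 1 \<le> sum (zz n) (S1 n l)" using split A R by linarith
  have "ee n * real (card (S1 n l - {w. isAD w})) \<le> ee n * (1 + 4*real n*(real n - 1))"
    using c ee_pos[OF n] by (intro mult_left_mono) auto
  thus "sum (zz n) (S1 n l) \<le> Bp n" using split A R unfolding Bp_def by linarith
qed

lemma ZZ_split: "ZZ n = (\<Sum>l\<in>Lt n. sum (zz n) (S1 n l))"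
  unfolding ZZ_def by (rule sum_Psi)

lemma ZZ_upper: "n \<ge> 2 \<Longrightarrow> ZZ n \<le> 2*real n * Bp n"
proof -
  assume n: "n \<ge> 2"
  have "ZZ n \<le> real (card (Lt n)) * Bp n" unfolding ZZ_split
    by (rule sum_bounded_above) (use zS1_bounds(2)[OF n] in auto)
  thus ?thesis by (simp add: Lt_card)
qed

lemma ZZ_rest: assumes n: "n \<ge> 2" and l: "l \<in> Lt n"
  shows "ZZ n - sum (zz n) (S1 n l) \<ge> (2*real n - 1)*(2*real n - 1)"
proof -
  have "ZZ n = sum (zz n) (S1 n l) + (\<Sum>l'\<in>Lt n - {l}. sum (zz n) (S1 n l'))"
    unfolding ZZ_split using sum.remove[OF Lt_fin l] by simp
  moreover have "(\<Sum>l'\<in>Lt n - {l}. sum (zz n) (S1 n l')) \<ge> real (card (Lt n - {l})) * (2*real n - 1)"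
    by (rule sum_bounded_below) (use zS1_bounds(1)[OF n] in auto)
  moreover have "real (card (Lt n - {l})) = 2*real n - 1" using l n by (simp add: Lt_card Lt_fin of_nat_diff)
  ultimately show ?thesis by simp
qed

lemma ZZ_pos: "n \<ge> 2 \<Longrightarrow> ZZ n > 0"
proof -
  assume n: "n \<ge> 2"
  have "(1,True) \<in> Lt n" using n unfolding Lt_def by auto
  note a = ZZ_rest[OF n this] zS1_bounds(1)[OF n this]
  have "(2*real n - 1)*(2*real n - 1) \<ge> 0" by simp
  moreover have "2*real n - 1 > 0" using n by simp
  ultimately show ?thesis using a by linarith
qed

lemma yy_Delta: "n \<ge> 2 \<Longrightarrow> yy n \<in> Delta n"
proof -
  assume n: "n \<ge> 2"
  have "sum (yy n) (Psi n) = sum (\<lambda>w. zz n w / ZZ n) (Psi n)"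
    by (rule sum.cong) (auto simp: yy_def)
  also have "\<dots> = ZZ n / ZZ n" unfolding ZZ_def by (rule sum_divide_distrib[symmetric])
  also have "\<dots> = 1" using ZZ_pos[OF n] by simp
  finally have s: "sum (yy n) (Psi n) = 1" .
  have p: "\<forall>w\<in>Psi n. yy n w > 0" unfolding yy_def using zz_pos[OF n] ZZ_pos[OF n] by simp
  have z: "\<forall>w. w \<notin> Psi n \<longrightarrow> yy n w = 0" unfolding yy_def by simp
  show ?thesis unfolding Delta_def using s p z by blast
qed

lemma yy_sum: "finite T \<Longrightarrow> sum (yy n) T = sum (zz n) (T \<inter> Psi n) / ZZ n"
proof -
  assume T: "finite T"
  have "sum (zz n) (T \<inter> Psi n) / ZZ n = sum (\<lambda>w. zz n w / ZZ n) (T \<inter> Psi n)"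
    by (simp add: sum_divide_distrib)
  also have "\<dots> = sum (\<lambda>w. if w \<in> Psi n then zz n w / ZZ n else 0) T"
    by (rule sum.inter_restrict[OF T])
  finally show ?thesis unfolding yy_def by simp
qed

lemma frel_yy:
  assumes n: "n \<ge> 2" and psi: "fst r \<in> Psi n" and T: "finite (snd r)"
    and q: "sum (zz n) (snd r \<inter> Psi n) > 0"
  shows "frel r (yy n) = (ZZ n - zz n (fst r)) / zz n (fst r) *
      ((ZZ n - sum (zz n) (snd r \<inter> Psi n)) / sum (zz n) (snd r \<inter> Psi n))"
proof -
  have Z: "ZZ n > 0" using ZZ_pos[OF n] .
  have p: "zz n (fst r) > 0" using zz_pos[OF n] .
  have x: "xr r (yy n) = zz n (fst r) / ZZ n" unfolding xr_def yy_def using psi by simp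
  have X: "Xr r (yy n) = sum (zz n) (snd r \<inter> Psi n) / ZZ n" unfolding Xr_def using yy_sum[OF T] .
  have g: "\<And>a::real. a > 0 \<Longrightarrow> (1 - a / ZZ n) / (a / ZZ n) = (ZZ n - a) / a"
    using Z by (simp add: field_simps)
  show ?thesis unfolding frel_def x X g[OF p] g[OF q] ..
qed

lemma frel_yy':
  assumes n: "n \<ge> 2" and psi: "\<psi> \<in> Psi n" and T: "finite T"
    and q: "sum (zz n) (T \<inter> Psi n) > 0"
  shows "frel (\<psi>, T) (yy n) = (ZZ n - zz n \<psi>) / zz n \<psi> *
      ((ZZ n - sum (zz n) (T \<inter> Psi n)) / sum (zz n) (T \<inter> Psi n))"
  using frel_yy[OF n, of "(\<psi>, T)"] psi T q by simp

lemma prod_bound: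
  fixes a b c d :: real
  assumes "0 \<le> a" "a \<le> c" "0 \<le> b" "b \<le> d"
  shows "a * b \<le> c * d"
  using assms by (intro mult_mono) auto

lemma Zm_eq: "n \<ge> 2 \<Longrightarrow> 2*real n * Bp n = (2*real n-1)*(10*real n-1)/4"
  unfolding Bp_def ee_def by (simp add: field_simps)

lemma S2_S1: "fst l2 \<in> {1..n} \<Longrightarrow> fst l1 \<noteq> fst l2 \<Longrightarrow> S2 n l1 l2 \<subseteq> S1 n l1"
  unfolding S2_def S1_def by (cases l1; cases l2) auto

lemma zS2_bound:
  assumes n: "n \<ge> 2" and l2: "fst l2 \<in> {1..n}"
  shows "sum (zz n) (S2 n l1 l2) \<le> 1 + ee n * (2*real n)"
proof -
  let ?A = "S2 n l1 l2 \<inter> {w. isAD w}"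
  have split: "sum (zz n) (S2 n l1 l2) = sum (zz n) ?A + sum (zz n) (S2 n l1 l2 - {w. isAD w})"
    by (rule sum.Int_Diff) (rule S2_fin)
  have "sum (zz n) ?A = real (card ?A)"
    by (subst sum.cong[where h="\<lambda>w. 1"]) (auto simp: zz_def)
  also have "card ?A \<le> card {[l1,l2,(fst l1, \<not> snd l1)]}" by (rule card_mono[OF _ S2_AD]) simp
  hence "real (card ?A) \<le> 1" by simp
  finally have A: "sum (zz n) ?A \<le> 1" .
  have "sum (zz n) (S2 n l1 l2 - {w. isAD w}) = ee n * real (card (S2 n l1 l2 - {w. isAD w}))"
    by (subst sum.cong[where h="\<lambda>w. ee n"]) (auto simp: zz_def)
  moreover have "card (S2 n l1 l2 - {w. isAD w}) \<le> card (S2 n l1 l2)" by (rule card_mono) (auto simp: S2_fin)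
  moreover have "card (S2 n l1 l2) \<le> 2*n" using S2_card[OF l2] .
  ultimately have "sum (zz n) (S2 n l1 l2 - {w. isAD w}) \<le> ee n * (2*real n)"
    using ee_pos[OF n] by (simp add: mult_left_mono)
  thus ?thesis using split A by linarith
qed

lemma alg2u:
  fixes N u :: real assumes "N \<noteq> 0" "u \<noteq> 0"
  shows "(u*(10*N-1)/4) * ((u*(10*N-1)/(8*N)) / (u*u)) = (10*N-1)*(10*N-1)/(32*N)"
  using assms by (simp add: field_simps)

lemma alg2:
  fixes N :: real assumes N2: "N \<ge> 2"
  shows "((2*N-1)*(10*N-1)/4) * (((2*N-1) + 1/(8*N)*(1+4*N*(N-1))) / ((2*N-1)*(2*N-1)))
       = (10*N-1)*(10*N-1)/(32*N)"
proof -
  have nz: "N \<noteq> 0" "2*N-1 \<noteq> 0" using N2 by auto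
  have b: "(2*N-1) + 1/(8*N)*(1+4*N*(N-1)) = (2*N-1)*(10*N-1)/(8*N)"
    using nz by (simp add: field_simps)
  show ?thesis unfolding b by (rule alg2u[OF nz])
qed

lemma alg3u:
  fixes N u :: real assumes "N \<noteq> 0" "u \<noteq> 0"
  shows "((u*(10*N-1)/4) / (1/(8*N))) * ((5/4) / (u*u)) = 5*N*(10*N-1) / (2*u)"
  using assms by (simp add: field_simps)

lemma alg3:
  fixes N :: real assumes N2: "N \<ge> 2"
  shows "(((2*N-1)*(10*N-1)/4) / (1/(8*N))) * ((1 + 1/(8*N) * (2*N)) / ((2*N - 1)*(2*N-1)))
       = 5*N*(10*N-1) / (2*(2*N-1))"
proof -
  have nz: "N \<noteq> 0" "2*N-1 \<noteq> 0" using N2 by auto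
  have b: "1 + 1/(8*N) * (2*N) = 5/4" using nz by (simp add: field_simps)
  show ?thesis unfolding b by (rule alg3u[OF nz])
qed

lemma bound_4b:
  assumes n: "n \<ge> 2" and l: "(i,t) \<in> Lt n" and j: "j \<in> {1..n}" "j \<noteq> i"
  shows "frel ([(i,t),(j,s),(i,\<not>t)], S1 n (i,t)) (yy n) < Lb n"
proof -
  define N where "N = real n"
  have N2: "N \<ge> 2" using n N_def by simp
  have lf: "fst (i,t) \<in> {1..n}" using Lt_fst[OF l] .
  have sub: "S1 n (i,t) \<subseteq> Psi n" using S1_sub[OF lf] .
  have m: "[(i,t),(j,s),(i,\<not>t)] \<in> S1 n (i,t)" using j lf unfolding S1_def by auto
  have z1: "zz n [(i,t),(j,s),(i,\<not>t)] = 1" unfolding zz_def isAD_def by simp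
  define q where "q = sum (zz n) (S1 n (i,t))"
  have q1: "q \<ge> 2*N - 1" using zS1_bounds(1)[OF n l] unfolding q_def N_def .
  have q0: "q > 0" using q1 N2 by linarith
  have eqI: "S1 n (i,t) \<inter> Psi n = S1 n (i,t)" using sub by blast
  have f: "frel ([(i,t),(j,s),(i,\<not>t)], S1 n (i,t)) (yy n) = (ZZ n - 1) / 1 * ((ZZ n - q) / q)"
  proof -
    have mP: "[(i,t),(j,s),(i,\<not>t)] \<in> Psi n" using m sub by blast
    have q0': "sum (zz n) (S1 n (i,t) \<inter> Psi n) > 0" unfolding eqI using q0 q_def by simp
    show ?thesis using frel_yy'[OF n mP S1_fin q0'] unfolding eqI z1 q_def .
  qed
  have rest: "ZZ n - q \<ge> (2*N - 1)*(2*N-1)" using ZZ_rest[OF n l] unfolding q_def N_def .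
  have sq: "(2*N - 1)*(2*N-1) \<ge> 1" using N2 by (simp add: mult_ge1_I) 
  have Zm: "ZZ n \<le> (2*N-1)*(10*N-1)/4" using ZZ_upper[OF n] Zm_eq[OF n] unfolding N_def by simp
  have a1: "(ZZ n - 1) / 1 \<le> (2*N-1)*(10*N-1)/4 - 1" using Zm by simp
  have a0: "(ZZ n - 1) / 1 \<ge> 0" using rest q0 sq by simp
  have "ZZ n / q \<le> ((2*N-1)*(10*N-1)/4) / (2*N-1)"
    using Zm q1 q0 rest N2 by (intro frac_le) auto
  also have "\<dots> = (10*N-1)/4" using N2 by (simp add: field_simps)
  finally have "ZZ n / q - 1 \<le> 5*(2*N-1)/4" by simp
  moreover have "(ZZ n - q)/q = ZZ n / q - 1" using q0 by (simp add: field_simps)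
  ultimately have b1: "(ZZ n - q)/q \<le> 5*(2*N-1)/4" by simp
  have "ZZ n - q \<ge> 0" using rest sq by linarith
  hence b0: "(ZZ n - q)/q \<ge> 0" using q0 by simp
  have "frel ([(i,t),(j,s),(i,\<not>t)], S1 n (i,t)) (yy n) \<le> ((2*N-1)*(10*N-1)/4 - 1) * (5*(2*N-1)/4)"
    unfolding f by (rule prod_bound[OF a0 a1 b0 b1])
  also have "\<dots> < Lb n" using num1[OF N2] unfolding Lb_def N_def .
  finally show ?thesis .
qed

lemma bound_1a:
  assumes n: "n \<ge> 2" and l: "(i,t) \<in> Lt n"
  shows "frel ([(i,t),(i,t)], Psi n - S1 n (i,t)) (yy n) < Lb n"
proof -
  define N where "N = real n"
  have N2: "N \<ge> 2" using n N_def by simp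
  have lf: "fst (i,t) \<in> {1..n}" using Lt_fst[OF l] .
  have sub: "S1 n (i,t) \<subseteq> Psi n" using S1_sub[OF lf] .
  have m: "[(i,t),(i,t)] \<in> S1 n (i,t)" unfolding S1_def by auto
  have z1: "zz n [(i,t),(i,t)] = 1" unfolding zz_def isAD_def by simp
  define p where "p = sum (zz n) (S1 n (i,t))"
  define q where "q = sum (zz n) (Psi n - S1 n (i,t))"
  have qe: "q = ZZ n - p" unfolding q_def p_def ZZ_def by (rule sum_diff[OF Psi_fin sub])
  have rest: "q \<ge> (2*N - 1)*(2*N-1)" using ZZ_rest[OF n l] unfolding qe p_def N_def .
  have sq: "(2*N - 1)*(2*N-1) \<ge> 1" using N2 by (simp add: mult_ge1_I)
  have q0: "q > 0" using rest sq by linarith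
  have eqI: "(Psi n - S1 n (i,t)) \<inter> Psi n = Psi n - S1 n (i,t)" by blast
  have f: "frel ([(i,t),(i,t)], Psi n - S1 n (i,t)) (yy n) = (ZZ n - 1) / 1 * ((ZZ n - q) / q)"
    using frel_yy'[OF n, of "[(i,t),(i,t)]" "Psi n - S1 n (i,t)"] m sub q0 Psi_fin
    unfolding q_def eqI z1 by blast
  have p1: "p \<ge> 2*N - 1" using zS1_bounds(1)[OF n l] unfolding p_def N_def .
  have p2: "p \<le> Bp n" using zS1_bounds(2)[OF n l] unfolding p_def .
  have Zm: "ZZ n \<le> (2*N-1)*(10*N-1)/4" using ZZ_upper[OF n] Zm_eq[OF n] unfolding N_def by simp
  have a1: "(ZZ n - 1) / 1 \<le> (2*N-1)*(10*N-1)/4" using Zm by simp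
  have a0: "(ZZ n - 1) / 1 \<ge> 0" using qe q0 p1 N2 by simp
  have "ZZ n - q = p" using qe by simp
  hence "(ZZ n - q)/q = p / q" by simp
  also have "\<dots> \<le> Bp n / ((2*N - 1)*(2*N-1))"
    using p1 p2 rest sq N2 by (intro frac_le) auto
  finally have b1: "(ZZ n - q)/q \<le> Bp n / ((2*N - 1)*(2*N-1))" .
  have b0: "(ZZ n - q)/q \<ge> 0" using \<open>ZZ n - q = p\<close> p1 q0 N2 by simp
  have "frel ([(i,t),(i,t)], Psi n - S1 n (i,t)) (yy n) \<le> ((2*N-1)*(10*N-1)/4) * (Bp n / ((2*N - 1)*(2*N-1)))"
    unfolding f by (rule prod_bound[OF a0 a1 b0 b1])
  also have "\<dots> = (10*N-1)*(10*N-1)/(32*N)"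
    unfolding Bp_def ee_def N_def[symmetric] using alg2[OF N2] .
  also have "\<dots> < Lb n" using num2[OF N2] N2 unfolding Lb_def N_def by (simp add: field_simps)
  finally show ?thesis .
qed

lemma bound_other:
  assumes n: "n \<ge> 2" and psi: "\<psi> \<in> Psi n" and l1: "l1 \<in> Lt n" and l2: "fst l2 \<in> {1..n}"
    and ne: "fst l1 \<noteq> fst l2"
  shows "frel (\<psi>, Psi n - S2 n l1 l2) (yy n) < Lb n"
proof -
  define N where "N = real n"
  have N2: "N \<ge> 2" using n N_def by simp
  have lf: "fst l1 \<in> {1..n}" using Lt_fst[OF l1] .
  have sub1: "S1 n l1 \<subseteq> Psi n" using S1_sub[OF lf] .
  have sub2: "S2 n l1 l2 \<subseteq> S1 n l1" using S2_S1[OF l2 ne] .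
  define q where "q = sum (zz n) (Psi n - S2 n l1 l2)"
  define p where "p = sum (zz n) (S2 n l1 l2)"
  have "sum (zz n) (Psi n - S2 n l1 l2) = ZZ n - sum (zz n) (S2 n l1 l2)"
    unfolding ZZ_def by (rule sum_diff[OF Psi_fin]) (use sub1 sub2 in blast)
  hence qe: "q = ZZ n - p" unfolding q_def p_def .
  have "p \<le> sum (zz n) (S1 n l1)" unfolding p_def
    by (rule sum_mono2[OF S1_fin sub2]) (simp add: less_imp_le[OF zz_pos[OF n]])
  hence rest: "q \<ge> (2*N - 1)*(2*N-1)" using ZZ_rest[OF n l1] unfolding qe N_def by linarith
  have sq: "(2*N - 1)*(2*N-1) \<ge> 1" using N2 by (simp add: mult_ge1_I)
  have q0: "q > 0" using rest sq by linarith
  have eqI: "(Psi n - S2 n l1 l2) \<inter> Psi n = Psi n - S2 n l1 l2" by blast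
  define c where "c = zz n \<psi>"
  have c0: "c > 0" and c1: "c \<le> 1" unfolding c_def using zz_pos[OF n] zz_le1[OF n] by auto
  have ce: "c \<ge> ee n" unfolding c_def zz_def using ee_le1[OF n] by simp
  have f: "frel (\<psi>, Psi n - S2 n l1 l2) (yy n) = (ZZ n - c) / c * ((ZZ n - q) / q)"
    using frel_yy'[OF n psi, of "Psi n - S2 n l1 l2"] q0 Psi_fin
    unfolding q_def eqI c_def by blast
  have p0: "p \<ge> 0" unfolding p_def using zz_pos[OF n] by (simp add: sum_nonneg less_imp_le)
  have Zm: "ZZ n \<le> (2*N-1)*(10*N-1)/4" using ZZ_upper[OF n] Zm_eq[OF n] unfolding N_def by simp
  have Z1: "ZZ n \<ge> 1" using qe p0 rest sq by linarith
  have a0: "(ZZ n - c) / c \<ge> 0" using Z1 c0 c1 by simp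
  have "(ZZ n - c) / c \<le> ZZ n / c" using c0 by (simp add: divide_right_mono)
  also have "\<dots> \<le> ((2*N-1)*(10*N-1)/4) / ee n"
    using Zm ce ee_pos[OF n] Z1 by (intro frac_le) auto
  finally have a1: "(ZZ n - c) / c \<le> ((2*N-1)*(10*N-1)/4) / ee n" .
  have "(ZZ n - q)/q = p / q" using qe by simp
  also have "\<dots> \<le> (1 + ee n * (2*N)) / ((2*N - 1)*(2*N-1))"
    using zS2_bound[OF n l2] p0 rest sq ee_pos[OF n] unfolding p_def N_def by (intro frac_le) auto
  finally have b1: "(ZZ n - q)/q \<le> (1 + ee n * (2*N)) / ((2*N - 1)*(2*N-1))" .
  have b0: "(ZZ n - q)/q \<ge> 0" using qe p0 q0 by simp
  have "frel (\<psi>, Psi n - S2 n l1 l2) (yy n) \<le> (((2*N-1)*(10*N-1)/4) / ee n) * ((1 + ee n * (2*N)) / ((2*N - 1)*(2*N-1)))"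
    unfolding f by (rule prod_bound[OF a0 a1 b0 b1])
  also have "\<dots> = 5*N*(10*N-1) / (2*(2*N-1))"
    unfolding ee_def N_def[symmetric] using alg3[OF N2] .
  also have "\<dots> < Lb n" using num3[OF N2] N2 unfolding Lb_def N_def by (simp add: field_simps)
  finally show ?thesis .
qed

lemma fin_1a: "finite (rel_1a n)"
proof -
  have "rel_1a n \<subseteq> (\<lambda>l. ([l,l], Psi n - S1 n l)) ` Lt n"
  proof
    fix r assume "r \<in> rel_1a n"
    then obtain i t where r: "r = ([(i,t),(i,t)], Psi n - S1 n (i,t))" "i \<in> {1..n}"
      unfolding rel_1a_def by blast
    show "r \<in> (\<lambda>l. ([l,l], Psi n - S1 n l)) ` Lt n"
      by (rule image_eqI[where x="(i,t)"]) (simp add: r(1), use r(2-) in \<open>simp add: Lt_def\<close>)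
  qed
  thus ?thesis by (rule finite_subset) (simp add: Lt_fin)
qed

lemma fin_2b: "finite (rel_2b n)"
proof -
  have "rel_2b n \<subseteq> (\<lambda>(l1,l2). ([l1,l2,l2], Psi n - S2 n l1 l2)) ` (Lt n \<times> Lt n)"
  proof
    fix r assume "r \<in> rel_2b n"
    then obtain i j t s where r: "r = ([(i,t),(j,s),(j,s)], Psi n - S2 n (i,t) (j,s))" "i \<in> {1..n}" "j \<in> {1..n}"
      unfolding rel_2b_def by blast
    show "r \<in> (\<lambda>(l1,l2). ([l1,l2,l2], Psi n - S2 n l1 l2)) ` (Lt n \<times> Lt n)"
      by (rule image_eqI[where x="((i,t),(j,s))"]) (simp add: r(1), use r(2-) in \<open>simp add: Lt_def\<close>)
  qed
  thus ?thesis by (rule finite_subset) (simp add: Lt_fin)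
qed

lemma fin_3a: "finite (rel_3a n)"
proof -
  have "rel_3a n \<subseteq> (\<lambda>(l1,l2). ([l1,l2,l1], Psi n - S2 n l2 l1)) ` (Lt n \<times> Lt n)"
  proof
    fix r assume "r \<in> rel_3a n"
    then obtain i j t s where r: "r = ([(i,t),(j,s),(i,t)], Psi n - S2 n (j,s) (i,t))" "i \<in> {1..n}" "j \<in> {1..n}"
      unfolding rel_3a_def by blast
    show "r \<in> (\<lambda>(l1,l2). ([l1,l2,l1], Psi n - S2 n l2 l1)) ` (Lt n \<times> Lt n)"
      by (rule image_eqI[where x="((i,t),(j,s))"]) (simp add: r(1), use r(2-) in \<open>simp add: Lt_def\<close>)
  qed
  thus ?thesis by (rule finite_subset) (simp add: Lt_fin)
qed

lemma fin_4b: "finite (rel_4b n)"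
proof -
  have "rel_4b n \<subseteq> (\<lambda>(l1,l2). ([l1,l2,(fst l1, \<not> snd l1)], S1 n l1)) ` (Lt n \<times> Lt n)"
  proof
    fix r assume "r \<in> rel_4b n"
    then obtain i j t s where r: "r = ([(i,t),(j,s),(i,\<not>t)], S1 n (i,t))" "i \<in> {1..n}" "j \<in> {1..n}"
      unfolding rel_4b_def by blast
    show "r \<in> (\<lambda>(l1,l2). ([l1,l2,(fst l1, \<not> snd l1)], S1 n l1)) ` (Lt n \<times> Lt n)"
      by (rule image_eqI[where x="((i,t),(j,s))"]) (simp add: r(1), use r(2-) in \<open>simp add: Lt_def\<close>)
  qed
  thus ?thesis by (rule finite_subset) (simp add: Lt_fin)
qed

lemma fin_5a: "finite (rel_5a n)"
proof -
  have "rel_5a n \<subseteq> (\<lambda>(l1,l2,l3). ([l1,l2,l3], Psi n - S2 n l2 l3)) ` (Lt n \<times> Lt n \<times> Lt n)"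
  proof
    fix r assume "r \<in> rel_5a n"
    then obtain i j k t s p where r: "r = ([(i,t),(j,s),(k,p)], Psi n - S2 n (j,s) (k,p))"
       "i \<in> {1..n}" "j \<in> {1..n}" "k \<in> {1..n}"
      unfolding rel_5a_def by blast
    show "r \<in> (\<lambda>(l1,l2,l3). ([l1,l2,l3], Psi n - S2 n l2 l3)) ` (Lt n \<times> Lt n \<times> Lt n)"
      by (rule image_eqI[where x="((i,t),(j,s),(k,p))"]) (simp add: r(1), use r(2-) in \<open>simp add: Lt_def\<close>)
  qed
  thus ?thesis by (rule finite_subset) (simp add: Lt_fin)
qed

lemma fin_Fam: "finite (Fam n)"
  unfolding Fam_def using fin_1a fin_2b fin_3a fin_4b fin_5a by blast

lemma all_bound:
  assumes n: "n \<ge> 2" and r: "r \<in> Fam n"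
  shows "frel r (yy n) < Lb n"
proof -
  have "r \<in> rel_1a n \<or> r \<in> rel_2b n \<or> r \<in> rel_3a n \<or> r \<in> rel_4b n \<or> r \<in> rel_5a n"
    using r unfolding Fam_def by blast
  thus ?thesis
  proof (elim disjE)
    assume "r \<in> rel_1a n"
    then obtain i t where r: "r = ([(i,t),(i,t)], Psi n - S1 n (i,t))" "i \<in> {1..n}"
      unfolding rel_1a_def by blast
    have "(i,t) \<in> Lt n" using r unfolding Lt_def by auto
    thus ?thesis using bound_1a[OF n] r by simp
  next
    assume "r \<in> rel_2b n"
    then obtain i j t s where r: "r = ([(i,t),(j,s),(j,s)], Psi n - S2 n (i,t) (j,s))"
       "i \<in> {1..n}" "j \<in> {1..n}" "i \<noteq> j"
      unfolding rel_2b_def by blast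
    have l1: "(i,t) \<in> Lt n" using r unfolding Lt_def by auto
    have psi: "[(i,t),(j,s),(j,s)] \<in> Psi n" using r unfolding Psi_def by blast
    show ?thesis using bound_other[OF n psi l1, of "(j,s)"] r by simp
  next
    assume "r \<in> rel_3a n"
    then obtain i j t s where r: "r = ([(i,t),(j,s),(i,t)], Psi n - S2 n (j,s) (i,t))"
       "i \<in> {1..n}" "j \<in> {1..n}" "i \<noteq> j"
      unfolding rel_3a_def by blast
    have l1: "(j,s) \<in> Lt n" using r unfolding Lt_def by auto
    have psi: "[(i,t),(j,s),(i,t)] \<in> Psi n" using r unfolding Psi_def by blast
    show ?thesis using bound_other[OF n psi l1, of "(i,t)"] r by simp
  next
    assume "r \<in> rel_4b n"
    then obtain i j t s where r: "r = ([(i,t),(j,s),(i,\<not>t)], S1 n (i,t))"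
       "i \<in> {1..n}" "j \<in> {1..n}" "i \<noteq> j"
      unfolding rel_4b_def by blast
    have l1: "(i,t) \<in> Lt n" using r unfolding Lt_def by auto
    show ?thesis using bound_4b[OF n l1, of j s] r by simp
  next
    assume "r \<in> rel_5a n"
    then obtain i j k t s p where r: "r = ([(i,t),(j,s),(k,p)], Psi n - S2 n (j,s) (k,p))"
       "i \<in> {1..n}" "j \<in> {1..n}" "k \<in> {1..n}" "i \<noteq> j" "j \<noteq> k"
      unfolding rel_5a_def by blast
    have l1: "(j,s) \<in> Lt n" using r unfolding Lt_def by auto
    have psi: "[(i,t),(j,s),(k,p)] \<in> Psi n" using r unfolding Psi_def by blast
    show ?thesis using bound_other[OF n psi l1, of "(k,p)"] r by simp
  qed
qed

lemma Fam_ne: "n \<ge> 2 \<Longrightarrow> Fam n \<noteq> {}"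
proof -
  assume n: "n \<ge> 2"
  have "([(1,True),(1,True)], Psi n - S1 n (1,True)) \<in> rel_1a n"
    unfolding rel_1a_def using n by auto
  thus ?thesis unfolding Fam_def by blast
qed

lemma Fmax_yy: "n \<ge> 2 \<Longrightarrow> Fmax n (yy n) < Lb n"
  unfolding Fmax_def using fin_Fam Fam_ne all_bound
  by (subst Max_less_iff) auto

lemma Fmax_ge: "r \<in> Fam n \<Longrightarrow> frel r x \<le> Fmax n x"
  unfolding Fmax_def using fin_Fam by (intro Max_ge) auto

lemma frel4b_nonneg:
  assumes x: "x \<in> Delta n" and ij: "i \<in> {1..n}" "j \<in> {1..n}" "i \<noteq> j"
  shows "frel ([(i,t),(j,s),(i,\<not>t)], S1 n (i,t)) x \<ge> 0"
proof -
  have sub: "S1 n (i,t) \<subseteq> Psi n" using S1_sub ij by auto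
  have m: "[(i,t),(j,s),(i,\<not>t)] \<in> S1 n (i,t)" using ij unfolding S1_def by auto
  have nn: "\<And>w. w \<in> Psi n \<Longrightarrow> x w \<ge> 0" using Delta_pos[OF x] less_imp_le by blast
  define a where "a = x [(i,t),(j,s),(i,\<not>t)]"
  define b where "b = sum x (S1 n (i,t))"
  have a0: "a > 0" unfolding a_def using m sub Delta_pos[OF x] by blast
  have ab: "a \<le> b" unfolding a_def b_def using m sub nn
    by (intro member_le_sum) (auto simp: S1_fin)
  have "sum x (S1 n (i,t)) \<le> sum x (Psi n)"
    by (rule sum_mono2[OF Psi_fin sub]) (use nn in auto)
  hence b1: "b \<le> 1" unfolding b_def using Delta_sum[OF x] by simp
  have "(1 - a)/a * ((1-b)/b) \<ge> 0" using a0 ab b1 by simp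
  thus ?thesis unfolding frel_def xr_def Xr_def a_def b_def by simp
qed

theorem theorem5p6:
  fixes n :: nat and r :: relation and xs :: "word \<Rightarrow> real"
  assumes "n \<ge> 2"
    and "r \<in> rel_4b n"
    and "xs \<in> Delta n"
    and "Fmax n xs = beta_star n"
  shows "xs \<in> Delta n \<inter> C_set r"
proof -
  have n: "n \<ge> 2" using assms(1) .
  obtain i j t s where r: "r = ([(i,t),(j,s),(i,\<not>t)], S1 n (i,t))"
       "i \<in> {1..n}" "j \<in> {1..n}" "i \<noteq> j"
    using assms(2) unfolding rel_4b_def by blast
  have rF: "r \<in> Fam n" using assms(2) unfolding Fam_def by blast
  have bdd: "bdd_below (Fmax n ` Delta n)"
  proof (rule bdd_belowI[where m=0])
    fix v assume "v \<in> Fmax n ` Delta n"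
    then obtain x where x: "x \<in> Delta n" "v = Fmax n x" by blast
    have "0 \<le> frel r x" using frel4b_nonneg[OF x(1) r(2-4)] r(1) by simp
    also have "\<dots> \<le> Fmax n x" by (rule Fmax_ge[OF rF])
    finally show "0 \<le> v" using x by simp
  qed
  have "beta_star n \<le> Fmax n (yy n)" unfolding beta_star_def
    by (rule cInf_lower[OF _ bdd]) (use yy_Delta[OF n] in blast)
  hence low: "Fmax n xs < Lb n" using Fmax_yy[OF n] assms(4) by simp
  have "xs \<in> C_set r"
  proof (rule ccontr)
    assume "xs \<notin> C_set r"
    hence v: "xs [(i,t),(j,s),(i,\<not>t)] + sum xs (S1 n (i,t)) - xs [(i,t),(j,s),(i,\<not>t)] * sum xs (S1 n (i,t)) \<ge> 3/4"
      unfolding C_set_def xr_def Xr_def r(1) by simp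
    obtain r' where r': "r' \<in> rel_4b n" "frel r' xs > Lb n"
      using partA[OF n assms(3) r(2-4) v] by blast
    have "r' \<in> Fam n" using r'(1) unfolding Fam_def by blast
    hence "frel r' xs \<le> Fmax n xs" by (rule Fmax_ge)
    thus False using r'(2) low by simp
  qed
  thus ?thesis using assms(3) by blast
qed

end
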